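(* Let $\lambda=(\lambda_1\ge\dots\ge\lambda_n)$ be a singular integral dominant weight (integers with $\lambda_j=\lambda_{j+1}$ for some $j$), and let $\lambda'=(\lambda'_1>\dots>\lambda'_n)$ be any regular integral dominant weight. Then the normal fan of $GT_{\lambda'}$ refines the normal fan of $GT_\lambda$.
   Context: For an integral dominant weight $\nu$, $GT_\nu\subset\mathbb R^{n(n+1)/2}$, with coordinates $A_{i,j}$ for $0\le i\le n-1$, $1\le j\le n-i$, is the polytope defined by $A_{0,j}=\nu_j$ and $A_{i,j}\ge A_{i+1,j}\ge A_{i,j+1}$ for $0\le i\le n-2$, $1\le j\le n-i-1$. The normal fan of a polytope $P$ is the collection of cones $\{c:\ \langle c,\cdot\rangle \text{ is maximized on } P \text{ along a given face}\}$ in the dual space; one fan refines another if each cone of the first is contained in a cone of the second. *)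

theory Defs
  imports Complex_Main
begin

definition GT_idx :: "nat \<Rightarrow> (nat \<times> nat) set" where
  "GT_idx n = {(i, j). i < n \<and> 1 \<le> j \<and> i + j \<le> n}"

text \<open>The ambient real vector space R^(n(n+1)/2) (and its dual), realised as functions
  on index pairs vanishing outside GT_idx n.\<close>
definition GT_space :: "nat \<Rightarrow> (nat \<times> nat \<Rightarrow> real) set" where
  "GT_space n = {x. \<forall>p. p \<notin> GT_idx n \<longrightarrow> x p = 0}"

definition pairing :: "nat \<Rightarrow> (nat \<times> nat \<Rightarrow> real) \<Rightarrow> (nat \<times> nat \<Rightarrow> real) \<Rightarrow> real" where
  "pairing n c x = (\<Sum>p\<in>GT_idx n. c p * x p)"

text \<open>Weights nu = (nu_1,...,nu_n) are integer sequences indexed from 1.\<close>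
definition dominant :: "nat \<Rightarrow> (nat \<Rightarrow> int) \<Rightarrow> bool" where
  "dominant n \<nu> \<longleftrightarrow> (\<forall>j. 1 \<le> j \<and> j < n \<longrightarrow> \<nu> j \<ge> \<nu> (j + 1))"

definition regular_dominant :: "nat \<Rightarrow> (nat \<Rightarrow> int) \<Rightarrow> bool" where
  "regular_dominant n \<nu> \<longleftrightarrow> (\<forall>j. 1 \<le> j \<and> j < n \<longrightarrow> \<nu> j > \<nu> (j + 1))"

definition GT :: "nat \<Rightarrow> (nat \<Rightarrow> int) \<Rightarrow> (nat \<times> nat \<Rightarrow> real) set" where
  "GT n \<nu> = {A \<in> GT_space n.
     (\<forall>j. 1 \<le> j \<and> j \<le> n \<longrightarrow> A (0, j) = real_of_int (\<nu> j)) \<and>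
     (\<forall>i j. i + 2 \<le> n \<and> 1 \<le> j \<and> i + j + 1 \<le> n \<longrightarrow>
          A (i, j) \<ge> A (i + 1, j) \<and> A (i + 1, j) \<ge> A (i, j + 1))}"

definition argmax_set :: "nat \<Rightarrow> (nat \<times> nat \<Rightarrow> real) set \<Rightarrow> (nat \<times> nat \<Rightarrow> real) \<Rightarrow> (nat \<times> nat \<Rightarrow> real) set" where
  "argmax_set n P c = {x \<in> P. \<forall>y\<in>P. pairing n c y \<le> pairing n c x}"

text \<open>Nonempty faces of a polytope P: the nonempty sets cut out by supporting hyperplanes,
  i.e. maximiser sets of linear functionals.\<close>
definition faces :: "nat \<Rightarrow> (nat \<times> nat \<Rightarrow> real) set \<Rightarrow> (nat \<times> nat \<Rightarrow> real) set set" where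
  "faces n P = {F. F \<noteq> {} \<and> (\<exists>c \<in> GT_space n. F = argmax_set n P c)}"

definition normal_cone :: "nat \<Rightarrow> (nat \<times> nat \<Rightarrow> real) set \<Rightarrow> (nat \<times> nat \<Rightarrow> real) set \<Rightarrow> (nat \<times> nat \<Rightarrow> real) set" where
  "normal_cone n P F = {c \<in> GT_space n. F \<subseteq> argmax_set n P c}"

definition normal_fan :: "nat \<Rightarrow> (nat \<times> nat \<Rightarrow> real) set \<Rightarrow> (nat \<times> nat \<Rightarrow> real) set set" where
  "normal_fan n P = normal_cone n P ` faces n P"

definition refines :: "'a set set \<Rightarrow> 'a set set \<Rightarrow> bool" where
  "refines \<Sigma>1 \<Sigma>2 \<longleftrightarrow> (\<forall>C\<in>\<Sigma>1. \<exists>D\<in>\<Sigma>2. C \<subseteq> D)"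

end

theory Submission
  imports Defs
begin

definition Rset :: "nat \<Rightarrow> (nat \<times> nat) set" where
  "Rset n = {(i,j). i+2 \<le> n \<and> 1 \<le> j \<and> i+j+1 \<le> n}"

lemma finite_Rset: "finite (Rset n)"
  by (rule finite_subset[of _ "{..n}\<times>{..n}"]) (auto simp: Rset_def)

lemma finite_GT_idx: "finite (GT_idx n)"
  by (rule finite_subset[of _ "{..n}\<times>{..n}"]) (auto simp: GT_idx_def)

lemma Rset_idx: "(i,j) \<in> Rset n \<Longrightarrow> (i,j) \<in> GT_idx n \<and> (i+1,j) \<in> GT_idx n \<and> (i,j+1) \<in> GT_idx n"
  by (auto simp: Rset_def GT_idx_def)

lemma GT_iff: "A \<in> GT n \<nu> \<longleftrightarrow> A \<in> GT_space n \<and> (\<forall>j. 1 \<le> j \<and> j \<le> n \<longrightarrow> A (0,j) = real_of_int (\<nu> j))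
   \<and> (\<forall>(i,j)\<in>Rset n. A (i,j) \<ge> A (i+1,j) \<and> A (i+1,j) \<ge> A (i,j+1))"
  unfolding GT_def Rset_def by auto

lemma pairing_lin: "pairing n c (\<lambda>p. a p + e * (b p - d p)) = pairing n c a + e * (pairing n c b - pairing n c d)"
  unfolding pairing_def by (simp add: algebra_simps sum.distrib sum_subtractf sum_distrib_left)

lemma pairing_sum: "pairing n (\<lambda>p. \<Sum>s\<in>S. h s p) x = (\<Sum>s\<in>S. pairing n (h s) x)"
  unfolding pairing_def by (simp add: sum_distrib_right) (rule sum.swap)

lemma pairing_add: "pairing n (\<lambda>p. c1 p + c2 p) x = pairing n c1 x + pairing n c2 x"
  unfolding pairing_def by (simp add: algebra_simps sum.distrib)

lemma pairing_diff: "pairing n (\<lambda>p. c1 p - c2 p) x = pairing n c1 x - pairing n c2 x"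
  unfolding pairing_def by (simp add: algebra_simps sum_subtractf)

lemma pairing_neg: "pairing n (\<lambda>p. - c1 p) x = - pairing n c1 x"
  unfolding pairing_def by (simp add: sum_negf)

lemma pairing_delta: "pairing n (\<lambda>p. if p = q then 1 else 0) x = x q" if "q \<in> GT_idx n"
proof -
  have "(\<Sum>p\<in>GT_idx n. (if p = q then 1 else 0) * x p) = (\<Sum>p\<in>GT_idx n. if q = p then x p else 0)"
    by (rule sum.cong) auto
  also have "\<dots> = x q" using finite_GT_idx[of n] that by (simp add: sum.delta)
  finally show ?thesis unfolding pairing_def .
qed

lemma ev_lemma:
  fixes u dd :: real
  assumes "0 \<le> u" "u = 0 \<Longrightarrow> 0 \<le> dd"
  shows "eventually (\<lambda>e. 0 \<le> u + e*dd) (at_right 0)"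
proof (cases "u = 0")
  case True
  have "eventually (\<lambda>e::real. e > 0) (at_right 0)" by (simp add: eventually_at_right_less)
  then show ?thesis by (rule eventually_mono) (use True assms in auto)
next
  case False
  have "((\<lambda>e. u + e*dd) \<longlongrightarrow> u + 0*dd) (at_right 0)"
    by (intro tendsto_intros)
  then have "eventually (\<lambda>e. 0 < u + e*dd) (at_right 0)"
    using False assms(1) by (intro order_tendstoD(1)) auto
  then show ?thesis by (rule eventually_mono) auto
qed

lemma dom_chain:
  assumes "dominant n lam" "1 \<le> j" "j \<le> k" "k \<le> n"
  shows "lam k \<le> lam j"
proof -
  have "k \<le> n \<longrightarrow> lam k \<le> lam j" using assms(3)
  proof (induction k rule: dec_induct)
    case base then show ?case by simp
  next
    case (step m)
    then show ?case using assms(1,2) unfolding dominant_def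
      by (metis Suc_eq_plus1 Suc_le_lessD Suc_leD order_trans le_trans)
  qed
  then show ?thesis using assms by simp
qed

lemma reg_chain:
  assumes "regular_dominant n lam" "1 \<le> j" "j < k" "k \<le> n"
  shows "lam k < lam j"
proof -
  have "\<forall>k. j < k \<longrightarrow> k \<le> n \<longrightarrow> lam k < lam j"
  proof
    fix k show "j < k \<longrightarrow> k \<le> n \<longrightarrow> lam k < lam j"
    proof (induction k)
      case 0 then show ?case by simp
    next
      case (Suc m)
      show ?case
      proof (cases "m = j")
        case True then show ?thesis using assms(1,2) unfolding regular_dominant_def by auto
      next
        case False
        show ?thesis
        proof (intro impI)
          assume "j < Suc m" "Suc m \<le> n"
          then have "j < m" "m \<le> n" using False by auto
          then have "lam m < lam j" using Suc.IH by simp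
          moreover have "lam (m+1) < lam m" using assms(1,2) \<open>j < m\<close> \<open>Suc m \<le> n\<close>
            unfolding regular_dominant_def by auto
          ultimately show "lam (Suc m) < lam j" by simp
        qed
      qed
    qed
  qed
  then show ?thesis using assms by simp
qed

definition fmap :: "nat \<Rightarrow> (nat\<Rightarrow>int) \<Rightarrow> (nat\<Rightarrow>int) \<Rightarrow> real \<Rightarrow> real" where
  "fmap n lam lam' t = Max (insert (real_of_int (lam n))
      {real_of_int (lam j) | j. 1 \<le> j \<and> j \<le> n \<and> real_of_int (lam' j) \<le> t})"

lemma fmap_fin: fixes n :: nat and lam lam' :: "nat \<Rightarrow> int" shows "finite {real_of_int (lam j) | j. 1 \<le> j \<and> j \<le> n \<and> real_of_int (lam' j) \<le> t}"
proof -
  have "{real_of_int (lam j) | j. 1 \<le> j \<and> j \<le> n \<and> real_of_int (lam' j) \<le> t} \<subseteq> (\<lambda>j. real_of_int (lam j)) ` {1..n}"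
    by auto
  moreover have "finite ((\<lambda>j. real_of_int (lam j)) ` {1..n})" by simp
  ultimately show ?thesis by (rule finite_subset)
qed

lemma fmap_mono: "t \<le> s \<Longrightarrow> fmap n lam lam' t \<le> fmap n lam lam' s"
  unfolding fmap_def by (rule Max_mono) (use fmap_fin in auto)

lemma fmap_val:
  assumes "dominant n lam" "regular_dominant n lam'" "1 \<le> k" "k \<le> n"
  shows "fmap n lam lam' (real_of_int (lam' k)) = real_of_int (lam k)"
  unfolding fmap_def
proof (rule Max_eqI)
  show "finite (insert (real_of_int (lam n))
      {real_of_int (lam j) | j. 1 \<le> j \<and> j \<le> n \<and> real_of_int (lam' j) \<le> real_of_int (lam' k)})"
    using fmap_fin by simp
next
  fix y assume "y \<in> insert (real_of_int (lam n))
      {real_of_int (lam j) | j. 1 \<le> j \<and> j \<le> n \<and> real_of_int (lam' j) \<le> real_of_int (lam' k)}"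
  then consider "y = real_of_int (lam n)" | j where "y = real_of_int (lam j)" "1 \<le> j" "j \<le> n" "lam' j \<le> lam' k"
    by auto
  then show "y \<le> real_of_int (lam k)"
  proof cases
    case 1 then show ?thesis using dom_chain[OF assms(1,3,4)] by simp
  next
    case 2
    have "k \<le> j"
    proof (rule ccontr)
      assume "\<not> k \<le> j"
      then have "lam' k < lam' j" using reg_chain[OF assms(2) \<open>1 \<le> j\<close> _ assms(4)] by simp
      then show False using 2 by simp
    qed
    then show ?thesis using dom_chain[OF assms(1) assms(3) \<open>k \<le> j\<close> \<open>j \<le> n\<close>] 2 by simp
  qed
next
  show "real_of_int (lam k) \<in> insert (real_of_int (lam n))
      {real_of_int (lam j) | j. 1 \<le> j \<and> j \<le> n \<and> real_of_int (lam' j) \<le> real_of_int (lam' k)}"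
    using assms by auto
qed

lemma key:
  assumes x'P: "x' \<in> GT n lam'" and x0P: "x0 \<in> GT n lam"
    and t1: "\<And>i j. (i,j) \<in> Rset n \<Longrightarrow> x' (i,j) = x' (i+1,j) \<Longrightarrow> x0 (i,j) = x0 (i+1,j)"
    and t2: "\<And>i j. (i,j) \<in> Rset n \<Longrightarrow> x' (i+1,j) = x' (i,j+1) \<Longrightarrow> x0 (i+1,j) = x0 (i,j+1)"
  shows "\<exists>F\<in>faces n (GT n lam). {c \<in> GT_space n. x' \<in> argmax_set n (GT n lam') c} \<subseteq> normal_cone n (GT n lam) F"
proof -
  define S1 where "S1 = {(i,j) \<in> Rset n. x' (i,j) = x' (i+1,j)}"
  define S2 where "S2 = {(i,j) \<in> Rset n. x' (i+1,j) = x' (i,j+1)}"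
  define d :: "nat\<times>nat \<Rightarrow> nat\<times>nat \<Rightarrow> real" where "d q p = (if p = q then 1 else 0)" for q p
  define c0 where "c0 = (\<lambda>p. - ((\<Sum>s\<in>S1. d s p - d (fst s+1, snd s) p)
                          + (\<Sum>s\<in>S2. d (fst s+1, snd s) p - d (fst s, snd s+1) p)))"
  define g where "g x = (\<Sum>s\<in>S1. x s - x (fst s+1, snd s)) + (\<Sum>s\<in>S2. x (fst s+1, snd s) - x (fst s, snd s+1))"
    for x :: "nat\<times>nat \<Rightarrow> real"
  have S1R: "S1 \<subseteq> Rset n" and S2R: "S2 \<subseteq> Rset n" by (auto simp: S1_def S2_def)
  have fin: "finite S1" "finite S2" using finite_subset[OF S1R finite_Rset] finite_subset[OF S2R finite_Rset] by auto
  have idx: "s \<in> Rset n \<Longrightarrow> s \<in> GT_idx n \<and> (fst s+1, snd s) \<in> GT_idx n \<and> (fst s, snd s+1) \<in> GT_idx n" for s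
    using Rset_idx[of "fst s" "snd s" n] by simp
  have hpair: "pairing n c0 x = - g x" for x
  proof -
    have A: "pairing n (\<lambda>p. d s p - d (fst s+1, snd s) p) x = x s - x (fst s+1, snd s)" if "s \<in> S1" for s
      using idx[of s] that S1R unfolding pairing_diff d_def by (auto simp: pairing_delta)
    have B: "pairing n (\<lambda>p. d (fst s+1, snd s) p - d (fst s, snd s+1) p) x = x (fst s+1, snd s) - x (fst s, snd s+1)"
      if "s \<in> S2" for s
      using idx[of s] that S2R unfolding pairing_diff d_def by (auto simp: pairing_delta)
    show ?thesis unfolding c0_def g_def pairing_neg pairing_add pairing_sum
      using sum.cong[OF refl A, of S1] sum.cong[OF refl B, of S2] by simp
  qed
  have nonneg1: "x \<in> GT n lam \<Longrightarrow> s \<in> Rset n \<Longrightarrow> 0 \<le> x s - x (fst s+1, snd s)" for x s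
    unfolding GT_iff by (cases s) auto
  have nonneg2: "x \<in> GT n lam \<Longrightarrow> s \<in> Rset n \<Longrightarrow> 0 \<le> x (fst s+1, snd s) - x (fst s, snd s+1)" for x s
    unfolding GT_iff by (cases s) auto
  have gge: "x \<in> GT n lam \<Longrightarrow> 0 \<le> g x" for x
    unfolding g_def using nonneg1[of x] nonneg2[of x] S1R S2R
    by (intro add_nonneg_nonneg sum_nonneg) auto
  have g0: "g x0 = 0"
  proof -
    have "\<forall>s\<in>S1. x0 s - x0 (fst s+1, snd s) = 0" using t1 unfolding S1_def by auto
    moreover have "\<forall>s\<in>S2. x0 (fst s+1, snd s) - x0 (fst s, snd s+1) = 0" using t2 unfolding S2_def by auto
    ultimately show ?thesis unfolding g_def by simp
  qed
  have c0sp: "c0 \<in> GT_space n"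
  proof -
    have "c0 p = 0" if "p \<notin> GT_idx n" for p
    proof -
      have "\<forall>s\<in>S1. d s p - d (fst s+1, snd s) p = 0" using idx S1R that unfolding d_def by fastforce
      moreover have "\<forall>s\<in>S2. d (fst s+1, snd s) p - d (fst s, snd s+1) p = 0" using idx S2R that unfolding d_def by fastforce
      ultimately show ?thesis unfolding c0_def by simp
    qed
    then show ?thesis unfolding GT_space_def by auto
  qed
  define F where "F = argmax_set n (GT n lam) c0"
  have x0F: "x0 \<in> F" unfolding F_def argmax_set_def hpair using x0P gge g0 by auto
  have Fface: "F \<in> faces n (GT n lam)" unfolding faces_def using x0F c0sp F_def by auto
  have Ftight: "x \<in> F \<Longrightarrow> (\<forall>s\<in>S1. x s = x (fst s+1, snd s)) \<and> (\<forall>s\<in>S2. x (fst s+1, snd s) = x (fst s, snd s+1))" for x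
  proof -
    assume xF: "x \<in> F"
    then have xP: "x \<in> GT n lam" and "pairing n c0 x0 \<le> pairing n c0 x"
      using x0F x0P unfolding F_def argmax_set_def by auto
    then have "g x \<le> 0" using g0 hpair by simp
    have s1: "0 \<le> (\<Sum>s\<in>S1. x s - x (fst s+1, snd s))" 
      using nonneg1[OF xP] S1R by (intro sum_nonneg) auto
    have s2: "0 \<le> (\<Sum>s\<in>S2. x (fst s+1, snd s) - x (fst s, snd s+1))" 
      using nonneg2[OF xP] S2R by (intro sum_nonneg) auto
    have e1: "(\<Sum>s\<in>S1. x s - x (fst s+1, snd s)) = 0" and e2: "(\<Sum>s\<in>S2. x (fst s+1, snd s) - x (fst s, snd s+1)) = 0"
      using s1 s2 \<open>g x \<le> 0\<close> unfolding g_def by linarith+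
    have "\<forall>s\<in>S1. x s - x (fst s+1, snd s) = 0"
      using e1 fin(1) nonneg1[OF xP] S1R sum_nonneg_eq_0_iff[of S1 "\<lambda>s. x s - x (fst s+1, snd s)"] by blast
    moreover have "\<forall>s\<in>S2. x (fst s+1, snd s) - x (fst s, snd s+1) = 0"
      using e2 fin(2) nonneg2[OF xP] S2R sum_nonneg_eq_0_iff[of S2 "\<lambda>s. x (fst s+1, snd s) - x (fst s, snd s+1)"] by blast
    ultimately show ?thesis by simp
  qed
  show ?thesis
  proof (intro bexI[OF _ Fface] subsetI)
    fix c assume c: "c \<in> {c \<in> GT_space n. x' \<in> argmax_set n (GT n lam') c}"
    show "c \<in> normal_cone n (GT n lam) F"
      unfolding normal_cone_def
    proof (intro CollectI conjI subsetI)
      show "c \<in> GT_space n" using c by simp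
      fix x assume xF: "x \<in> F"
      then have xP: "x \<in> GT n lam" unfolding F_def argmax_set_def by simp
      show "x \<in> argmax_set n (GT n lam) c" unfolding argmax_set_def
      proof (intro CollectI conjI ballI xP)
        fix y assume yP: "y \<in> GT n lam"
        define z where "z e = (\<lambda>p. x' p + e * (y p - x p))" for e :: real
        have sp: "z e \<in> GT_space n" for e
          using x'P xP yP unfolding GT_iff GT_space_def z_def by auto
        have mk: "\<forall>j. 1 \<le> j \<and> j \<le> n \<longrightarrow> z e (0,j) = real_of_int (lam' j)" for e
          using x'P xP yP unfolding GT_iff z_def by auto
        have evs: "\<forall>s\<in>Rset n. eventually (\<lambda>e. z e (fst s+1, snd s) \<le> z e s \<and> z e (fst s, snd s+1) \<le> z e (fst s+1, snd s)) (at_right 0)"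
        proof
          fix s assume sR: "s \<in> Rset n"
          have ev1: "eventually (\<lambda>e. 0 \<le> (x' s - x' (fst s+1, snd s)) + e * ((y s - y (fst s+1, snd s)) - (x s - x (fst s+1, snd s)))) (at_right 0)"
          proof (rule ev_lemma)
            show "0 \<le> x' s - x' (fst s+1, snd s)" using x'P sR unfolding GT_iff by (cases s) auto
            assume "x' s - x' (fst s + 1, snd s) = 0"
            then have "s \<in> S1" using sR unfolding S1_def by (cases s) auto
            then have "x s = x (fst s+1, snd s)" using Ftight[OF xF] by auto
            then show "0 \<le> (y s - y (fst s+1, snd s)) - (x s - x (fst s+1, snd s))"
              using nonneg1[OF yP sR] by simp
          qed
          have ev2: "eventually (\<lambda>e. 0 \<le> (x' (fst s+1, snd s) - x' (fst s, snd s+1)) + e * ((y (fst s+1, snd s) - y (fst s, snd s+1)) - (x (fst s+1, snd s) - x (fst s, snd s+1)))) (at_right 0)"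
          proof (rule ev_lemma)
            show "0 \<le> x' (fst s+1, snd s) - x' (fst s, snd s+1)" using x'P sR unfolding GT_iff by (cases s) auto
            assume "x' (fst s+1, snd s) - x' (fst s, snd s+1) = 0"
            then have "s \<in> S2" using sR unfolding S2_def by (cases s) auto
            then have "x (fst s+1, snd s) = x (fst s, snd s+1)" using Ftight[OF xF] by auto
            then show "0 \<le> (y (fst s+1, snd s) - y (fst s, snd s+1)) - (x (fst s+1, snd s) - x (fst s, snd s+1))"
              using nonneg2[OF yP sR] by simp
          qed
          show "eventually (\<lambda>e. z e (fst s+1, snd s) \<le> z e s \<and> z e (fst s, snd s+1) \<le> z e (fst s+1, snd s)) (at_right 0)"
            using eventually_conj[OF ev1 ev2] by (rule eventually_mono) (simp add: z_def algebra_simps)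
        qed
        have "eventually (\<lambda>e. \<forall>s\<in>Rset n. z e (fst s+1, snd s) \<le> z e s \<and> z e (fst s, snd s+1) \<le> z e (fst s+1, snd s)) (at_right 0)"
          using eventually_ball_finite[OF finite_Rset evs] .
        moreover have "eventually (\<lambda>e::real. e > 0) (at_right 0)" by (simp add: eventually_at_right_less)
        ultimately have "eventually (\<lambda>e. (\<forall>s\<in>Rset n. z e (fst s+1, snd s) \<le> z e s \<and> z e (fst s, snd s+1) \<le> z e (fst s+1, snd s)) \<and> e > 0) (at_right 0)"
          by (rule eventually_conj)
        then obtain e where e: "\<forall>s\<in>Rset n. z e (fst s+1, snd s) \<le> z e s \<and> z e (fst s, snd s+1) \<le> z e (fst s+1, snd s)" "e > 0"
          using eventually_happens[of _ "at_right (0::real)"] by auto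
        have "z e \<in> GT n lam'" unfolding GT_iff using sp mk e(1) by auto
        then have "pairing n c (z e) \<le> pairing n c x'" using c unfolding argmax_set_def by auto
        then have "e * (pairing n c y - pairing n c x) \<le> 0" unfolding z_def pairing_lin by simp
        then show "pairing n c y \<le> pairing n c x" using e(2)
          by (simp add: mult_le_0_iff)
      qed
    qed
  qed
qed

theorem mainTheorem8:
  fixes n :: nat and lam lam' :: "nat \<Rightarrow> int"
  assumes "dominant n lam"
    and "\<exists>j. 1 \<le> j \<and> j < n \<and> lam j = lam (j + 1)"
    and "regular_dominant n lam'"
  shows "refines (normal_fan n (GT n lam')) (normal_fan n (GT n lam))"
  unfolding refines_def normal_fan_def
proof
  fix C assume "C \<in> normal_cone n (GT n lam') ` faces n (GT n lam')"
  then obtain F' where F': "F' \<in> faces n (GT n lam')" and C: "C = normal_cone n (GT n lam') F'" by auto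
  then obtain x' where x'F: "x' \<in> F'" unfolding faces_def by auto
  have x'P: "x' \<in> GT n lam'" using F' x'F unfolding faces_def argmax_set_def by auto
  define x0 where "x0 p = (if p \<in> GT_idx n then fmap n lam lam' (x' p) else 0)" for p
  have x0P: "x0 \<in> GT n lam" unfolding GT_iff
  proof (intro conjI allI impI ballI)
    show "x0 \<in> GT_space n" unfolding GT_space_def x0_def by auto
    fix j assume j: "1 \<le> j \<and> j \<le> n"
    then have "(0,j) \<in> GT_idx n" unfolding GT_idx_def by auto
    then show "x0 (0,j) = real_of_int (lam j)"
      using x'P j fmap_val[OF assms(1,3)] unfolding GT_iff x0_def by auto
  next
    fix s assume s: "s \<in> Rset n"
    obtain i j where ij: "s = (i,j)" by (cases s)
    show "case s of (i, j) \<Rightarrow> x0 (i + 1, j) \<le> x0 (i, j) \<and> x0 (i, j + 1) \<le> x0 (i + 1, j)"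
      using s x'P Rset_idx[of i j n] unfolding ij GT_iff x0_def by (auto intro!: fmap_mono)
  qed
  have t1: "x0 (i,j) = x0 (i+1,j)" if "(i,j) \<in> Rset n" "x' (i,j) = x' (i+1,j)" for i j
    using that Rset_idx[of i j n] unfolding x0_def by auto
  have t2: "x0 (i+1,j) = x0 (i,j+1)" if "(i,j) \<in> Rset n" "x' (i+1,j) = x' (i,j+1)" for i j
    using that Rset_idx[of i j n] unfolding x0_def by auto
  obtain F where F: "F \<in> faces n (GT n lam)"
    and sub: "{c \<in> GT_space n. x' \<in> argmax_set n (GT n lam') c} \<subseteq> normal_cone n (GT n lam) F"
    using key[OF x'P x0P t1 t2] by blast
  have "C \<subseteq> {c \<in> GT_space n. x' \<in> argmax_set n (GT n lam') c}"
    unfolding C normal_cone_def using x'F by auto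
  then show "\<exists>D\<in>normal_cone n (GT n lam) ` faces n (GT n lam). C \<subseteq> D"
    using sub F by blast
qed

end
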